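(* In the setting of the RoPE kernel $h_R((x,s),(y,t))=\beta^{-1}\exp(\beta\langle x,R_{\omega(t-s)}y\rangle)$ on $\mathbb S^{2}\times I$, assume $d=3$, $E=\mathrm{span}\{e_1,e_2\}$ and $\omega=2\pi m$ with $m\in\mathbb Z\setminus\{0\}$. Let $u\in\mathbb S^2$ have polar angle $\theta\in[0,\pi]$, i.e. $\langle u,e_3\rangle=\cos\theta$. Then $x^\ast(s)=R_{-\omega s}u$ defines a global maximizer $\mu^\ast=\Gamma[x^\ast]$ of $\mathcal E_R[\mu]=\frac12\iint h_R\,d\mu\,d\mu$ on $\mathcal P_I$, and its content marginal $(x^\ast)_{\#}ds$ is the uniform (normalized arc-length) probability measure on the circle $\{v\in\mathbb S^2:\langle v,e_3\rangle=\cos\theta\}$ (a Dirac mass when $\theta\in\{0,\pi\}$).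
   Context: $I:=(0,1]$ with Lebesgue measure $ds$; $\mathcal P_I$ is the set of Borel probability measures on $\mathbb S^{d-1}\times I$ with $I$-marginal $ds$. For $\theta\in\mathbb R$, $R_\theta\in O(d)$ rotates by angle $\theta$ on the plane $E$ and is the identity on $E^\perp$. For a measurable path $x:I\to\mathbb S^{d-1}$, $\Gamma[x]:=(s\mapsto(x(s),s))_{\#}ds$. $\beta>0$. *)

theory Defs
  imports "HOL-Probability.Probability"
begin

definition S2 :: "(real^3) set" where
  "S2 = {x. norm x = 1}"

definition Itime :: "real set" where
  "Itime = {0<..1}"

definition ds :: "real measure" where
  "ds = density lborel (indicator Itime)"

definition Rot :: "real \<Rightarrow> real^3 \<Rightarrow> real^3" where
  "Rot \<theta> v = vector [cos \<theta> * v$1 - sin \<theta> * v$2, sin \<theta> * v$1 + cos \<theta> * v$2, v$3]"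

definition P_I :: "((real^3) \<times> real) measure set" where
  "P_I = {\<mu>. prob_space \<mu> \<and> sets \<mu> = sets (borel :: ((real^3) \<times> real) measure)
             \<and> emeasure \<mu> (- (S2 \<times> Itime)) = 0
             \<and> distr \<mu> borel snd = ds}"

definition Gamma :: "(real \<Rightarrow> real^3) \<Rightarrow> ((real^3) \<times> real) measure" where
  "Gamma x = distr ds borel (\<lambda>s. (x s, s))"

definition hR :: "real \<Rightarrow> real \<Rightarrow> (real^3) \<times> real \<Rightarrow> (real^3) \<times> real \<Rightarrow> real" where
  "hR \<beta> \<omega> p q = exp (\<beta> * (fst p \<bullet> Rot (\<omega> * (snd q - snd p)) (fst q))) / \<beta>"

definition ER :: "real \<Rightarrow> real \<Rightarrow> ((real^3) \<times> real) measure \<Rightarrow> real" where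
  "ER \<beta> \<omega> \<mu> = (1/2) * (\<integral>p. (\<integral>q. hR \<beta> \<omega> p q \<partial>\<mu>) \<partial>\<mu>)"

text \<open>Uniform (normalized arc-length) probability measure on the circle
  {v in S^2. <v,e3> = cos theta}, via its constant-speed parametrization
  (Dirac mass at the pole when theta in {0, pi}).\<close>
definition circle_uniform :: "real \<Rightarrow> (real^3) measure" where
  "circle_uniform \<theta> = distr (uniform_measure lborel {0..2*pi}) borel
     (\<lambda>\<phi>. vector [sin \<theta> * cos \<phi>, sin \<theta> * sin \<phi>, cos \<theta>])"

end

theory Submission imports Defs begin

lemma inner3: "(x::real^3) \<bullet> y = x$1*y$1 + x$2*y$2 + x$3*y$3"
  by (simp add: inner_vec_def sum_3)

lemma Rot_comp: "Rot a (Rot b v) = Rot (a+b) v"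
  by (simp add: Rot_def vec_eq_iff forall_3 cos_add sin_add algebra_simps)

lemma Rot_inner: "Rot a v \<bullet> Rot a w = v \<bullet> w"
proof -
  have L: "(cos a * v $ 1 - sin a * v $ 2) * (cos a * w $ 1 - sin a * w $ 2) +
    (sin a * v $ 1 + cos a * v $ 2) * (sin a * w $ 1 + cos a * w $ 2)
    = ((sin a)^2 + (cos a)^2) * (v$1 * w$1 + v$2*w$2)" (is "?L = _")
    by algebra
  also have "\<dots> = v$1 * w$1 + v$2*w$2" by simp
  finally have E: "?L = v$1 * w$1 + v$2*w$2" .
  have "Rot a v \<bullet> Rot a w = ?L + v$3*w$3" by (simp add: Rot_def inner3)
  then show ?thesis using E by (simp add: inner3)
qed

lemma norm_Rot: "norm (Rot a v) = norm v"
  by (simp add: norm_eq_sqrt_inner Rot_inner)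

lemma vector3_eq: "(vector [a,b,c] :: real^3) = a *\<^sub>R axis 1 1 + b *\<^sub>R axis 2 1 + c *\<^sub>R axis 3 1"
  by (simp add: vec_eq_iff forall_3 axis_def)

lemma Rot_cont: "continuous_on UNIV (\<lambda>(t, v). Rot t v)"
  unfolding Rot_def vector3_eq case_prod_beta
  by (intro continuous_intros)

lemma Rot_cont': "continuous_on S f \<Longrightarrow> continuous_on S g \<Longrightarrow> continuous_on S (\<lambda>x. Rot (f x) (g x))"
  using continuous_on_compose2[OF Rot_cont, of S "\<lambda>x. (f x, g x)"]
  by (auto intro!: continuous_intros)

lemma hR_cont: "continuous_on UNIV (\<lambda>(p, q). hR \<beta> \<omega> p q)"
  unfolding hR_def case_prod_beta divide_inverse
  by (intro continuous_intros Rot_cont') 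

lemma sets_ds[simp, measurable_cong]: "sets ds = sets borel"
  by (simp add: ds_def)

lemma space_ds[simp]: "space ds = UNIV"
  by (simp add: ds_def)

lemma emeasure_ds: "A \<in> sets borel \<Longrightarrow> emeasure ds A = emeasure lborel (A \<inter> Itime)"
  unfolding ds_def Itime_def
  by (subst emeasure_density) (auto simp: indicator_inter_arith[symmetric] mult.commute)

lemma prob_space_ds: "prob_space ds"
proof
  show "emeasure ds (space ds) = 1"
    by (simp add: emeasure_ds Itime_def)
qed

lemma S2_sphere: "S2 = sphere 0 1"
  by (auto simp: S2_def)

lemma S2I_meas: "S2 \<times> Itime \<in> sets (borel :: ((real^3) \<times> real) measure)"
proof -
  have "S2 \<times> Itime \<in> sets (borel \<Otimes>\<^sub>M borel :: ((real^3) \<times> real) measure)"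
    by (intro pair_measureI) (auto simp: S2_sphere Itime_def intro: borel_closed)
  then show ?thesis by (simp only: borel_prod)
qed

lemma bound_int:
  fixes f :: "'a \<Rightarrow> real"
  assumes "prob_space M" "AE x in M. f x \<le> c" "0 \<le> c"
  shows "integral\<^sup>L M f \<le> c"
proof (cases "integrable M f")
  case True
  interpret prob_space M by fact
  have "integral\<^sup>L M f \<le> integral\<^sup>L M (\<lambda>_. c)"
    by (rule integral_mono_AE[OF True _ assms(2)]) simp
  then show ?thesis by (simp add: prob_space)
next
  case False then show ?thesis using assms by (simp add: not_integrable_integral_eq)
qed

lemma g_meas: "(\<lambda>s. (Rot (c * s) u, s)) \<in> measurable ds borel"
proof -
  have "continuous_on UNIV (\<lambda>s::real. (Rot (c * s) u, s))"
    by (intro continuous_intros Rot_cont')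
  then have "(\<lambda>s. (Rot (c * s) u, s)) \<in> borel_measurable borel"
    by (rule borel_measurable_continuous_onI)
  then show ?thesis by (subst measurable_cong_sets[OF sets_ds refl])
qed

lemma x_meas: "(\<lambda>s. Rot (c * s) u) \<in> measurable ds borel"
proof -
  have "continuous_on UNIV (\<lambda>s::real. Rot (c * s) u)"
    by (intro continuous_intros Rot_cont')
  then have "(\<lambda>s. Rot (c * s) u) \<in> borel_measurable borel"
    by (rule borel_measurable_continuous_onI)
  then show ?thesis by (subst measurable_cong_sets[OF sets_ds refl])
qed

lemma Gamma_in:
  assumes "u \<in> S2"
  shows "Gamma (\<lambda>s. Rot (c * s) u) \<in> P_I"
proof -
  let ?g = "\<lambda>s. (Rot (c * s) u, s)"
  interpret ds: prob_space ds by (rule prob_space_ds)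
  have pg: "prob_space (Gamma (\<lambda>s. Rot (c * s) u))"
    unfolding Gamma_def by (rule ds.prob_space_distr[OF g_meas])
  have sg: "sets (Gamma (\<lambda>s. Rot (c * s) u)) = sets borel" by (simp add: Gamma_def)
  have cm: "- (S2 \<times> Itime) \<in> sets borel" using S2I_meas by auto
  have pre: "?g -` (- (S2 \<times> Itime)) \<inter> space ds = - Itime"
    using assms by (auto simp: S2_def norm_Rot)
  have e0: "emeasure (Gamma (\<lambda>s. Rot (c * s) u)) (- (S2 \<times> Itime)) = 0"
    unfolding Gamma_def
    by (subst emeasure_distr[OF g_meas cm], subst pre, subst emeasure_ds) (auto simp: Itime_def)
  have snd_meas: "snd \<in> measurable (borel :: ((real^3) \<times> real) measure) borel"
    by (intro borel_measurable_continuous_onI continuous_intros)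
  have "distr (Gamma (\<lambda>s. Rot (c * s) u)) borel snd = distr ds borel (\<lambda>s. snd (?g s))"
    unfolding Gamma_def using distr_distr[OF snd_meas g_meas] by (simp add: comp_def)
  also have "\<dots> = ds" by (simp add: distr_id2)
  finally show ?thesis using pg sg e0 by (simp add: P_I_def)
qed

lemma hR_le:
  assumes "\<beta> > 0" "fst p \<in> S2" "fst q \<in> S2"
  shows "hR \<beta> \<omega> p q \<le> exp \<beta> / \<beta>"
proof -
  have "fst p \<bullet> Rot (\<omega> * (snd q - snd p)) (fst q) \<le> norm (fst p) * norm (Rot (\<omega> * (snd q - snd p)) (fst q))"
    by (rule norm_cauchy_schwarz)
  also have "\<dots> = 1" using assms by (simp add: norm_Rot S2_def)
  finally have "exp (\<beta> * (fst p \<bullet> Rot (\<omega> * (snd q - snd p)) (fst q))) \<le> exp \<beta>"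
    using assms(1) by (simp add: mult_left_le)
  then show ?thesis unfolding hR_def using assms(1) by (simp add: divide_right_mono)
qed

lemma ER_le:
  assumes "\<beta> > 0" "\<mu> \<in> P_I"
  shows "ER \<beta> \<omega> \<mu> \<le> (1/2) * (exp \<beta> / \<beta>)"
proof -
  have ps: "prob_space \<mu>" and e0: "emeasure \<mu> (- (S2 \<times> Itime)) = 0"
    and sm: "sets \<mu> = sets borel" using assms by (auto simp: P_I_def)
  have cm: "- (S2 \<times> Itime) \<in> sets \<mu>" using S2I_meas sm by auto
  have AE: "AE p in \<mu>. fst p \<in> S2"
    by (rule AE_I'[of "- (S2 \<times> Itime)"]) (use cm e0 in auto)
  have c0: "0 \<le> exp \<beta> / \<beta>" using assms by simp
  have "(\<integral>p. (\<integral>q. hR \<beta> \<omega> p q \<partial>\<mu>) \<partial>\<mu>) \<le> exp \<beta> / \<beta>"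
  proof (rule bound_int[OF ps _ c0])
    show "AE p in \<mu>. (\<integral>q. hR \<beta> \<omega> p q \<partial>\<mu>) \<le> exp \<beta> / \<beta>"
      using AE
    proof eventually_elim
      case (elim p)
      show ?case
        by (rule bound_int[OF ps _ c0]) (use AE in \<open>eventually_elim, use elim assms in \<open>auto intro: hR_le\<close>\<close>)
    qed
  qed
  then show ?thesis unfolding ER_def by simp
qed

lemma ER_Gamma:
  assumes "u \<in> S2"
  shows "ER \<beta> \<omega> (Gamma (\<lambda>s. Rot ((-\<omega>) * s) u)) = (1/2) * (exp \<beta> / \<beta>)"
proof -
  define c where "c = -\<omega>"
  let ?g = "\<lambda>s. (Rot (c * s) u, s)"
  define G where "G = Gamma (\<lambda>s. Rot (c * s) u)"
  interpret ds: prob_space ds by (rule prob_space_ds)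
  interpret G: prob_space G unfolding G_def Gamma_def by (rule ds.prob_space_distr[OF g_meas])
  have sG: "sets G = sets borel" by (simp add: G_def Gamma_def)
  have hc: "hR \<beta> \<omega> (?g s) (?g t) = exp \<beta> / \<beta>" for s t
  proof -
    have "Rot (\<omega> * (t - s)) (Rot (c * t) u) = Rot (c * s) u"
      by (simp add: Rot_comp c_def algebra_simps)
    moreover have "Rot (c * s) u \<bullet> Rot (c * s) u = 1"
      using assms by (simp add: S2_def norm_Rot flip: power2_norm_eq_inner) 
    ultimately show ?thesis by (simp add: hR_def)
  qed
  have hm: "case_prod (hR \<beta> \<omega>) \<in> borel_measurable (borel \<Otimes>\<^sub>M G)"
  proof -
    have "case_prod (hR \<beta> \<omega>) \<in> borel_measurable (borel :: (((real^3) \<times> real) \<times> ((real^3) \<times> real)) measure)"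
      by (rule borel_measurable_continuous_onI[OF hR_cont])
    moreover have "sets (borel \<Otimes>\<^sub>M G) = sets (borel :: (((real^3) \<times> real) \<times> ((real^3) \<times> real)) measure)"
      using sets_pair_measure_cong[OF refl sG, of borel] borel_prod[where 'a="(real^3)\<times>real" and 'b="(real^3)\<times>real"] by metis
    ultimately show ?thesis by (subst measurable_cong_sets[OF _ refl])
  qed
  have Fm: "(\<lambda>p. \<integral>q. hR \<beta> \<omega> p q \<partial>G) \<in> borel_measurable borel"
    by (rule G.borel_measurable_lebesgue_integral[OF hm])
  have hpm: "hR \<beta> \<omega> p \<in> borel_measurable borel" for p
  proof -
    have "continuous_on UNIV (hR \<beta> \<omega> p)"
      unfolding hR_def divide_inverse by (intro continuous_intros Rot_cont')
    then show ?thesis by (rule borel_measurable_continuous_onI)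
  qed
  have inner: "(\<integral>q. hR \<beta> \<omega> (?g s) q \<partial>G) = exp \<beta> / \<beta>" for s
  proof -
    have "(\<integral>q. hR \<beta> \<omega> (?g s) q \<partial>G) = (\<integral>t. hR \<beta> \<omega> (?g s) (?g t) \<partial>ds)"
      unfolding G_def Gamma_def by (rule integral_distr[OF g_meas hpm])
    also have "\<dots> = exp \<beta> / \<beta>" by (simp add: hc ds.prob_space[simplified])
    finally show ?thesis .
  qed
  have "(\<integral>p. (\<integral>q. hR \<beta> \<omega> p q \<partial>G) \<partial>G) = (\<integral>s. (\<integral>q. hR \<beta> \<omega> (?g s) q \<partial>G) \<partial>ds)"
    unfolding G_def Gamma_def by (rule integral_distr[OF g_meas Fm[unfolded G_def Gamma_def]])
  also have "\<dots> = exp \<beta> / \<beta>" by (simp add: inner ds.prob_space[simplified])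
  finally show ?thesis unfolding ER_def G_def c_def by simp
qed


lemma shift_int:
  fixes f :: "real \<Rightarrow> ennreal"
  assumes "f \<in> borel_measurable borel"
  shows "(\<integral>\<^sup>+x. f x \<partial>lborel) = (\<integral>\<^sup>+x. f (t + x) \<partial>lborel)"
  using nn_integral_real_affine[OF assms, of 1 t] by simp

lemma per_int:
  fixes g :: "real \<Rightarrow> ennreal"
  assumes "\<And>x. g (x + T) = g x"
  shows "g (x + real_of_int k * T) = g x"
proof -
  have nat: "g (y + real n * T) = g y" for y n
  proof (induction n)
    case (Suc n)
    have "g (y + real (Suc n) * T) = g ((y + real n * T) + T)" by (simp add: algebra_simps)
    then show ?case using assms Suc by simp
  qed simp
  show ?thesis
  proof (cases "k \<ge> 0")
    case True
    then show ?thesis using nat[of x "nat k"] by simp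
  next
    case False
    have "g (x + real_of_int k * T) = g ((x + real_of_int k * T) + real (nat (-k)) * T)"
      by (rule nat[symmetric])
    also have "\<dots> = g x" using False by (simp add: algebra_simps)
    finally show ?thesis .
  qed
qed

lemma per_interval:
  fixes g :: "real \<Rightarrow> ennreal"
  assumes gm[measurable]: "g \<in> borel_measurable borel" and per: "\<And>x. g (x + T) = g x" and T: "T > 0"
  shows "(\<integral>\<^sup>+x. g x * indicator {a<..a+T} x \<partial>lborel) = (\<integral>\<^sup>+x. g x * indicator {0<..T} x \<partial>lborel)"
proof -
  define n where "n = \<lfloor>a / T\<rfloor>"
  define p where "p = (real_of_int n + 1) * T"
  have n1: "real_of_int n * T \<le> a" unfolding n_def using T
    by (metis floor_divide_lower)
  have n2: "a < p" unfolding p_def n_def using T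
    by (metis floor_divide_upper)
  have n3: "p \<le> a + T" using n1 by (simp add: p_def algebra_simps)
  have split: "indicator {a<..a+T} x = (indicator {a<..p} x + indicator {p<..a+T} x :: ennreal)" for x
    using n2 n3 by (auto simp: indicator_def)
  have "(\<integral>\<^sup>+x. g x * indicator {a<..a+T} x \<partial>lborel)
      = (\<integral>\<^sup>+x. g x * indicator {a<..p} x \<partial>lborel) + (\<integral>\<^sup>+x. g x * indicator {p<..a+T} x \<partial>lborel)"
    by (simp add: split distrib_left nn_integral_add)
  also have "(\<integral>\<^sup>+x. g x * indicator {a<..p} x \<partial>lborel)
      = (\<integral>\<^sup>+x. g (real_of_int n * T + x) * indicator {a<..p} (real_of_int n * T + x) \<partial>lborel)"
    by (rule shift_int) simp
  also have "\<dots> = (\<integral>\<^sup>+x. g x * indicator {a - real_of_int n * T<..T} x \<partial>lborel)"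
    using per_int[of g T, OF per]
    by (intro nn_integral_cong) (auto simp: indicator_def p_def algebra_simps)
  also have "(\<integral>\<^sup>+x. g x * indicator {p<..a+T} x \<partial>lborel)
      = (\<integral>\<^sup>+x. g (p + x) * indicator {p<..a+T} (p + x) \<partial>lborel)"
    by (rule shift_int) simp
  also have "\<dots> = (\<integral>\<^sup>+x. g x * indicator {0<..a - real_of_int n * T} x \<partial>lborel)"
    using per_int[of g T, OF per, of _ "n+1"]
    by (intro nn_integral_cong) (auto simp: indicator_def p_def algebra_simps)
  also have "(\<integral>\<^sup>+x. g x * indicator {a - real_of_int n * T<..T} x \<partial>lborel) + \<dots>
      = (\<integral>\<^sup>+x. g x * indicator {0<..T} x \<partial>lborel)"
  proof -
    have "indicator {0<..T} x = (indicator {a - real_of_int n * T<..T} x + indicator {0<..a - real_of_int n * T} x :: ennreal)" for x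
      using n1 n2 n3 by (auto simp: indicator_def p_def algebra_simps)
    then show ?thesis by (simp add: distrib_left nn_integral_add)
  qed
  finally show ?thesis .
qed

lemma per_interval_N:
  fixes g :: "real \<Rightarrow> ennreal"
  assumes gm[measurable]: "g \<in> borel_measurable borel" and per: "\<And>x. g (x + T) = g x" and T: "T > 0"
  shows "(\<integral>\<^sup>+x. g x * indicator {a<..a + real N * T} x \<partial>lborel) = of_nat N * (\<integral>\<^sup>+x. g x * indicator {0<..T} x \<partial>lborel)"
proof (induction N)
  case 0
  then show ?case by simp
next
  case (Suc N)
  have "0 \<le> T * real N" using T by simp
  have "indicator {a<..a + real (Suc N) * T} x = (indicator {a<..a + real N * T} x + indicator {a + real N * T<..(a + real N * T) + T} x :: ennreal)" for x
    using T by (auto simp: indicator_def algebra_simps) (use \<open>0 \<le> T * real N\<close> in linarith)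
  then have "(\<integral>\<^sup>+x. g x * indicator {a<..a + real (Suc N) * T} x \<partial>lborel)
     = (\<integral>\<^sup>+x. g x * indicator {a<..a + real N * T} x \<partial>lborel) + (\<integral>\<^sup>+x. g x * indicator {a + real N * T<..(a + real N * T) + T} x \<partial>lborel)"
    by (simp add: distrib_left nn_integral_add)
  also have "\<dots> = of_nat (Suc N) * (\<integral>\<^sup>+x. g x * indicator {0<..T} x \<partial>lborel)"
    using Suc per_interval[OF gm per T, of "a + real N * T"] by (simp add: algebra_simps)
  finally show ?case .
qed

lemma main_int:
  fixes g :: "real \<Rightarrow> ennreal" and m :: int
  assumes gm[measurable]: "g \<in> borel_measurable borel" and per: "\<And>x. g (x + 2*pi) = g x" and m: "m \<noteq> 0"
  shows "(\<integral>\<^sup>+s. indicator {0<..1} s * g (\<alpha> - 2*pi*real_of_int m * s) \<partial>lborel)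
       = (\<integral>\<^sup>+\<phi>. g \<phi> * indicator {0..2*pi} \<phi> \<partial>lborel) / ennreal (2*pi)"
proof -
  define c where "c = - 2*pi*real_of_int m"
  define N where "N = nat \<bar>m\<bar>"
  define lo where "lo = min \<alpha> (\<alpha> + c)"
  define J where "J = {lo<..lo + real N * (2*pi)}"
  define L where "L = (\<integral>\<^sup>+s. indicator {0<..1} s * g (\<alpha> - 2*pi*real_of_int m * s) \<partial>lborel)"
  define I0 where "I0 = (\<integral>\<^sup>+\<phi>. g \<phi> * indicator {0..2*pi} \<phi> \<partial>lborel)"
  have c0: "c \<noteq> 0" using m by (simp add: c_def)
  have N0: "N > 0" using m by (simp add: N_def)
  have absc: "\<bar>c\<bar> = 2*pi * real N" using m by (simp add: c_def N_def abs_mult)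
  have AE01: "AE s in lborel. s \<noteq> (0::real) \<and> s \<noteq> 1"
    using AE_lborel_singleton[of "0::real"] AE_lborel_singleton[of "1::real"] by eventually_elim auto
  have "(\<integral>\<^sup>+\<phi>. g \<phi> * indicator J \<phi> \<partial>lborel)
      = ennreal \<bar>c\<bar> * (\<integral>\<^sup>+s. g (\<alpha> + c * s) * indicator J (\<alpha> + c * s) \<partial>lborel)"
    by (rule nn_integral_real_affine[OF _ c0]) (simp add: J_def)
  also have "(\<integral>\<^sup>+s. g (\<alpha> + c * s) * indicator J (\<alpha> + c * s) \<partial>lborel) = L"
    unfolding L_def
  proof (rule nn_integral_cong_AE)
    show "AE s in lborel. g (\<alpha> + c * s) * indicator J (\<alpha> + c * s) = indicator {0<..1} s * g (\<alpha> - 2*pi*real_of_int m * s)"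
      using AE01
    proof eventually_elim
      case (elim s)
      have e: "\<alpha> + c * s = \<alpha> - 2*pi*real_of_int m * s" by (simp add: c_def)
      have "(\<alpha> + c * s \<in> J) = (s \<in> {0<..1})"
      proof (cases "m > 0")
        case True
        then have cn: "c < 0" by (simp add: c_def)
        have lo: "lo = \<alpha> + c" using cn by (simp add: lo_def)
        have up: "lo + real N * (2*pi) = \<alpha>" using absc cn lo by (simp add: algebra_simps)
        have h1: "c < c * s \<longleftrightarrow> s < 1"
          using mult_less_cancel_left_neg[OF cn, of 1 s] by simp
        have h2: "c * s \<le> 0 \<longleftrightarrow> 0 \<le> s" using cn by (auto simp: mult_le_0_iff)
        show ?thesis unfolding J_def up unfolding lo using elim h1 h2 by auto
      next
        case False
        then have "real_of_int m < 0" using m by simp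
        then have cn: "c > 0" using mult_pos_neg[OF pi_gt_zero, of "real_of_int m"] by (simp add: c_def)
        have lo: "lo = \<alpha>" using cn by (simp add: lo_def)
        have up: "lo + real N * (2*pi) = \<alpha> + c" using absc cn lo by (simp add: algebra_simps)
        show ?thesis unfolding J_def up unfolding lo using elim cn
          by (auto simp: zero_less_mult_iff)
      qed
      then show ?case using e by (simp add: indicator_def)
    qed
  qed
  finally have e1: "(\<integral>\<^sup>+\<phi>. g \<phi> * indicator J \<phi> \<partial>lborel) = ennreal \<bar>c\<bar> * L" .
  have "(\<integral>\<^sup>+\<phi>. g \<phi> * indicator J \<phi> \<partial>lborel) = of_nat N * (\<integral>\<^sup>+x. g x * indicator {0<..2*pi} x \<partial>lborel)"
    unfolding J_def by (rule per_interval_N[OF gm per]) simp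
  also have "(\<integral>\<^sup>+x. g x * indicator {0<..2*pi} x \<partial>lborel) = I0"
    unfolding I0_def
    by (rule nn_integral_cong_AE) (use AE_lborel_singleton[of "0::real"] in \<open>eventually_elim, auto simp: indicator_def\<close>)
  finally have e2: "ennreal \<bar>c\<bar> * L = of_nat N * I0" using e1 by simp
  have "ennreal \<bar>c\<bar> = of_nat N * ennreal (2*pi)"
    by (simp add: absc ennreal_mult' mult.commute ennreal_of_nat_eq_real_of_nat)
  then have "of_nat N * (ennreal (2*pi) * L) = of_nat N * I0" using e2 by (simp add: mult.assoc)
  then have e3: "ennreal (2*pi) * L = I0" using N0 by (simp add: ennreal_mult_cancel_left)
  have "I0 / ennreal (2*pi) = L * ennreal (2*pi) / ennreal (2*pi)" using e3 by (simp add: mult.commute)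
  also have "\<dots> = L" by (rule ennreal_mult_divide_eq) simp_all
  finally show ?thesis unfolding L_def I0_def by simp
qed


lemma Rot_P: "Rot b (vector [s * cos a, s * sin a, z]) = vector [s * cos (a + b), s * sin (a + b), z]"
  by (simp add: Rot_def vec_eq_iff forall_3 cos_add sin_add algebra_simps)

lemma angle_exists:
  assumes "u \<in> S2" "0 \<le> \<theta>" "\<theta> \<le> pi" "u \<bullet> axis 3 1 = cos \<theta>"
  shows "\<exists>\<alpha>. u = vector [sin \<theta> * cos \<alpha>, sin \<theta> * sin \<alpha>, cos \<theta>]"
proof -
  have u3: "u$3 = cos \<theta>" using assms(4) by (simp add: inner3 axis_def)
  have "u \<bullet> u = 1" using assms(1) by (simp add: S2_def flip: power2_norm_eq_inner)
  then have "(u$1)^2 + (u$2)^2 + (cos \<theta>)^2 = 1" using u3 by (simp add: inner3 power2_eq_square)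
  then have ss: "(u$1)^2 + (u$2)^2 = (sin \<theta>)^2" by (simp add: sin_squared_eq)
  have s0: "sin \<theta> \<ge> 0" using assms by (simp add: sin_ge_zero)
  show ?thesis
  proof (cases "sin \<theta> = 0")
    case True
    then have "u$1 = 0" "u$2 = 0" using ss by (simp_all add: sum_power2_eq_zero_iff)
    then show ?thesis using True u3 by (auto simp: vec_eq_iff forall_3)
  next
    case False
    then have "(u$1 / sin \<theta>)^2 + (u$2 / sin \<theta>)^2 = 1" using ss
      by (simp add: power_divide add_divide_distrib[symmetric])
    then obtain t where "u$1 / sin \<theta> = cos t" "u$2 / sin \<theta> = sin t" by (rule sincos_total_2pi)
    then have "u$1 = sin \<theta> * cos t" "u$2 = sin \<theta> * sin t" using False by (simp_all add: field_simps)
    then show ?thesis using u3 by (auto simp: vec_eq_iff forall_3)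
  qed
qed

lemma P_cont: "continuous_on UNIV (\<lambda>\<phi>::real. (vector [s * cos \<phi>, s * sin \<phi>, z] :: real^3))"
  unfolding vector3_eq by (intro continuous_intros)

lemma part3:
  assumes "m \<noteq> 0" "\<omega> = 2 * pi * real_of_int m"
    and "u = vector [sin \<theta> * cos \<alpha>, sin \<theta> * sin \<alpha>, cos \<theta>]"
  shows "distr ds borel (\<lambda>s. Rot (- \<omega> * s) u) = circle_uniform \<theta>"
proof -
  define P where "P = (\<lambda>\<phi>::real. (vector [sin \<theta> * cos \<phi>, sin \<theta> * sin \<phi>, cos \<theta>] :: real^3))"
  have Pm[measurable]: "P \<in> borel_measurable borel"
    unfolding P_def by (rule borel_measurable_continuous_onI[OF P_cont])
  have xP: "Rot (- \<omega> * s) u = P (\<alpha> - 2*pi*real_of_int m * s)" for s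
  proof -
    have a: "\<alpha> + (- \<omega> * s) = \<alpha> - 2*pi*real_of_int m * s" using assms(2) by simp
    show ?thesis unfolding assms(3) Rot_P a P_def ..
  qed
  have Pper: "P (x + 2*pi) = P x" for x by (simp add: P_def)
  show ?thesis
  proof (rule measure_eqI)
    show "sets (distr ds borel (\<lambda>s. Rot (- \<omega> * s) u)) = sets (circle_uniform \<theta>)"
      by (simp add: circle_uniform_def)
  next
    fix A assume "A \<in> sets (distr ds borel (\<lambda>s. Rot (- \<omega> * s) u))"
    then have A[measurable]: "A \<in> sets borel" by simp
    define g where "g = (\<lambda>\<phi>. indicator A (P \<phi>) :: ennreal)"
    have gm: "g \<in> borel_measurable borel" unfolding g_def by measurable
    have gper: "g (x + 2*pi) = g x" for x by (simp add: g_def Pper)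
    have xm: "(\<lambda>s. Rot (- \<omega> * s) u) \<in> measurable ds borel" by (rule x_meas)
    have "emeasure (distr ds borel (\<lambda>s. Rot (- \<omega> * s) u)) A
        = (\<integral>\<^sup>+y. indicator A y \<partial>distr ds borel (\<lambda>s. Rot (- \<omega> * s) u))"
      by (simp add: nn_integral_indicator)
    also have "\<dots> = (\<integral>\<^sup>+s. indicator A (Rot (- \<omega> * s) u) \<partial>ds)"
      by (rule nn_integral_distr[OF xm]) simp
    also have "\<dots> = (\<integral>\<^sup>+s. indicator Itime s * g (\<alpha> - 2*pi*real_of_int m * s) \<partial>lborel)"
      unfolding ds_def g_def xP
      by (rule nn_integral_density) (auto simp: Itime_def)
    also have "\<dots> = (\<integral>\<^sup>+\<phi>. g \<phi> * indicator {0..2*pi} \<phi> \<partial>lborel) / ennreal (2*pi)"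
      unfolding Itime_def by (rule main_int[OF gm gper assms(1)])
    also have "\<dots> = (\<integral>\<^sup>+\<phi>. g \<phi> \<partial>uniform_measure lborel {0..2*pi})"
      by (subst nn_integral_uniform_measure) (auto simp: gm)
    also have "\<dots> = (\<integral>\<^sup>+y. indicator A y \<partial>circle_uniform \<theta>)"
      unfolding circle_uniform_def g_def P_def
      by (rule nn_integral_distr[symmetric]) (auto simp: P_def[symmetric] Pm)
    also have "\<dots> = emeasure (circle_uniform \<theta>) A"
      by (simp add: nn_integral_indicator circle_uniform_def)
    finally show "emeasure (distr ds borel (\<lambda>s. Rot (- \<omega> * s) u)) A = emeasure (circle_uniform \<theta>) A" .
  qed
qed

theorem corollary3p2:
  fixes \<beta> \<omega> \<theta> :: real and m :: int and u :: "real^3"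
  assumes "\<beta> > 0"
    and "m \<noteq> 0"
    and "\<omega> = 2 * pi * real_of_int m"
    and "u \<in> S2"
    and "0 \<le> \<theta>" and "\<theta> \<le> pi"
    and "u \<bullet> axis 3 1 = cos \<theta>"
  defines "xstar \<equiv> (\<lambda>s. Rot (- \<omega> * s) u)"
  shows "Gamma xstar \<in> P_I
         \<and> (\<forall>\<mu>\<in>P_I. ER \<beta> \<omega> \<mu> \<le> ER \<beta> \<omega> (Gamma xstar))
         \<and> distr ds borel xstar = circle_uniform \<theta>"
proof (intro conjI ballI)
  show "Gamma xstar \<in> P_I" unfolding xstar_def by (rule Gamma_in[OF assms(4)])
next
  fix \<mu> assume "\<mu> \<in> P_I"
  then show "ER \<beta> \<omega> \<mu> \<le> ER \<beta> \<omega> (Gamma xstar)"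
    using ER_le[OF assms(1)] ER_Gamma[OF assms(4), of \<beta> \<omega>] unfolding xstar_def by simp
next
  obtain \<alpha> where "u = vector [sin \<theta> * cos \<alpha>, sin \<theta> * sin \<alpha>, cos \<theta>]"
    using angle_exists[OF assms(4-7)] by blast
  then show "distr ds borel xstar = circle_uniform \<theta>"
    unfolding xstar_def by (rule part3[OF assms(2,3)])
qed

end
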